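(* Let ${\mathcal E}$ be a trigonometric polynomial with support $S$, let $\Lambda\subset{\mathbb Z}^d$ be a polytope and let $E\in{\mathbb C}$. A finitely supported $w\in\ell^2({\mathbb Z}^d)$ satisfies $((E-H_0)w)(x)=0$ for all $x\notin\Lambda$ if and only if $w$ is supported in the $S$-interior $\Lambda^S$ of $\Lambda$.
   Context: ${\mathcal E}:{\mathbb T}^d\to{\mathbb R}$, ${\mathbb T}^d={\mathbb R}^d/(2\pi{\mathbb Z}^d)$, is a Morse function (nondegenerate critical points) with exactly two critical points of definite Hessian (a minimum and a maximum) and all others of indefinite Hessian, and is a trigonometric polynomial ${\mathcal E}(k)=\sum_{s\in S}{\mathcal E}_se^{\imath s\cdot k}$ with ${\mathcal E}_s\neq0$ exactly for $s$ in the finite set $S\subset{\mathbb Z}^d$ (the support of $H_0$; $S=-S$ since ${\mathcal E}$ is real). $H_0=\sum_{s\in S}{\mathcal E}_sT_s$ on $\ell^2({\mathbb Z}^d)$, $(T_s\psi)(x)=\psi(x-s)$. A vector $a\in{\mathbb Z}^d$ is prime if the gcd of its coordinates is $1$. For prime $a$ and $m\in{\mathbb Z}$, $\mathscr H^+_{a,m}=\{x\in{\mathbb Z}^d:a\cdot x\ge m\}$ and $\mathscr H_{a,m}=\{x:a\cdot x=m\}$; $\mathscr H^+_{a,m}$ is a contact half-plane of $\Lambda$ if $\Lambda\subset\mathscr H^+_{a,m}$ and $\Lambda\cap\mathscr H_{a,m}\ne\emptyset$. The convex hull of $\Lambda$ is the intersection of all its contact half-planes; $\Lambda$ is convex if it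 equals its convex hull, and a polytope is a finite nonempty convex set. The $S$-interior of $\Lambda$ is $\Lambda^S=\{x\in\Lambda:x+S\subset\Lambda\}$. *)

theory Defs
  imports "HOL-Analysis.Analysis"
begin

text \<open>Lattice points of Z^d are modelled as int ^ 'd (dimension d = CARD('d)).\<close>

definition zdot :: "int ^ 'd \<Rightarrow> int ^ 'd \<Rightarrow> int" where
  "zdot a x = (\<Sum>i\<in>UNIV. a $ i * x $ i)"

definition prime_vec :: "int ^ 'd \<Rightarrow> bool" where
  "prime_vec a \<longleftrightarrow> Gcd (range (\<lambda>i. a $ i)) = 1"

definition half_plane :: "int ^ 'd \<Rightarrow> int \<Rightarrow> (int ^ 'd) set" where
  "half_plane a m = {x. zdot a x \<ge> m}"

definition hyper_plane :: "int ^ 'd \<Rightarrow> int \<Rightarrow> (int ^ 'd) set" where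
  "hyper_plane a m = {x. zdot a x = m}"

definition contact_half_plane :: "(int ^ 'd) set \<Rightarrow> int ^ 'd \<Rightarrow> int \<Rightarrow> bool" where
  "contact_half_plane \<Lambda> a m \<longleftrightarrow> prime_vec a \<and> \<Lambda> \<subseteq> half_plane a m
     \<and> \<Lambda> \<inter> hyper_plane a m \<noteq> {}"

definition lattice_hull :: "(int ^ 'd) set \<Rightarrow> (int ^ 'd) set" where
  "lattice_hull \<Lambda> = \<Inter> {half_plane a m | a m. contact_half_plane \<Lambda> a m}"

definition lattice_convex :: "(int ^ 'd) set \<Rightarrow> bool" where
  "lattice_convex \<Lambda> \<longleftrightarrow> \<Lambda> = lattice_hull \<Lambda>"

definition lattice_polytope :: "(int ^ 'd) set \<Rightarrow> bool" where
  "lattice_polytope \<Lambda> \<longleftrightarrow> finite \<Lambda> \<and> \<Lambda> \<noteq> {} \<and> lattice_convex \<Lambda>"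

definition S_interior :: "(int ^ 'd) set \<Rightarrow> (int ^ 'd) set \<Rightarrow> (int ^ 'd) set" where
  "S_interior S \<Lambda> = {x \<in> \<Lambda>. (\<lambda>s. x + s) ` S \<subseteq> \<Lambda>}"

definition coeff_support :: "(int ^ 'd \<Rightarrow> complex) \<Rightarrow> (int ^ 'd) set" where
  "coeff_support c = {s. c s \<noteq> 0}"

text \<open>H_0 = sum over s in S of c_s T_s, with (T_s psi)(x) = psi(x - s).\<close>
definition H0 :: "(int ^ 'd \<Rightarrow> complex) \<Rightarrow> (int ^ 'd \<Rightarrow> complex) \<Rightarrow> int ^ 'd \<Rightarrow> complex" where
  "H0 c \<psi> x = (\<Sum>s\<in>coeff_support c. c s * \<psi> (x - s))"

end

theory Submission
  imports Defs
begin

lemma generic: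
  fixes V :: "('a::real_inner) set"
  assumes "finite V" "0 \<notin> V"
  shows "\<And>\<delta>. \<delta> > 0 \<Longrightarrow> \<exists>b. norm (b - b0) < \<delta> \<and> (\<forall>v\<in>V. b \<bullet> v \<noteq> 0)"
  using assms
proof (induction V rule: finite_induct)
  case empty
  then show ?case by (intro exI[of _ b0]) auto
next
  case (insert v F)
  from insert.prems have v0: "v \<noteq> 0" and F0: "0 \<notin> F" by auto
  obtain b1 where b1: "norm (b1 - b0) < \<delta>/2" "\<forall>u\<in>F. b1 \<bullet> u \<noteq> 0"
    using insert.IH[of "\<delta>/2"] insert.prems F0 by auto
  define B where "B = (\<lambda>u. - (b1 \<bullet> u) / (v \<bullet> u)) ` insert v F"
  have finB: "finite B" unfolding B_def using insert.hyps by auto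
  define e where "e = \<delta> / (2 * (norm v + 1))"
  have e0: "e > 0" unfolding e_def using insert.prems by (simp add: add_pos_nonneg)
  have "infinite ({0<..<e} - B)"
    using infinite_Ioo[OF e0] finB by (simp add: Diff_infinite_finite)
  then obtain t where t: "t \<in> {0<..<e}" "t \<notin> B"
    by (metis Diff_iff finite.emptyI ex_in_conv)
  have nv: "norm (t *\<^sub>R v) < \<delta>/2"
  proof -
    have "norm (t *\<^sub>R v) = t * norm v" using t by simp
    also have "\<dots> \<le> e * norm v" using t by (intro mult_right_mono) auto
    also have "\<dots> = \<delta>/2 * (norm v/(norm v+1))" unfolding e_def by (simp add: field_simps)
    also have "\<dots> < \<delta>/2 * 1" using insert.prems by (intro mult_strict_left_mono) (auto simp: divide_less_eq add_pos_nonneg)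
    finally show ?thesis by simp
  qed
  have good: "(b1 + t *\<^sub>R v) \<bullet> u \<noteq> 0" if u: "u \<in> insert v F" for u
  proof
    assume h: "(b1 + t *\<^sub>R v) \<bullet> u = 0"
    hence h': "b1 \<bullet> u + t * (v \<bullet> u) = 0" by (simp add: inner_add_left)
    show False
    proof (cases "v \<bullet> u = 0")
      case True
      then have "u \<noteq> v" using v0 by auto
      then have "u \<in> F" using u by auto
      then show False using b1 h' True by auto
    next
      case False
      then have "t = - (b1 \<bullet> u) / (v \<bullet> u)" using h' by (simp add: field_simps)
      then have "t \<in> B" unfolding B_def using u by auto
      then show False using t by auto
    qed
  qed
  have "norm (b1 + t *\<^sub>R v - b0) \<le> norm (b1 - b0) + norm (t *\<^sub>R v)"
    by (metis add.commute add_diff_eq norm_triangle_ineq diff_add_eq)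
  then have "norm (b1 + t *\<^sub>R v - b0) < \<delta>" using nv b1 by linarith
  then show ?case using good by blast
qed


theorem mainTheorem9:
  fixes c :: "int ^ 'd \<Rightarrow> complex"
    and \<Lambda> :: "(int ^ 'd) set"
    and E :: complex
    and w :: "int ^ 'd \<Rightarrow> complex"
  assumes fin_S: "finite (coeff_support c)"
    and real_E: "\<And>s. c (- s) = cnj (c s)"
    and nonconst: "\<exists>s\<in>coeff_support c. s \<noteq> 0"
    and poly: "lattice_polytope \<Lambda>"
    and fin_w: "finite {x. w x \<noteq> 0}"
  shows "(\<forall>x. x \<notin> \<Lambda> \<longrightarrow> E * w x - H0 c w x = 0)
     \<longleftrightarrow> {x. w x \<noteq> 0} \<subseteq> S_interior (coeff_support c) \<Lambda>"
proof -
  define Sc where "Sc = coeff_support c"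
  define W where "W = {x. w x \<noteq> 0}"
  have H0e: "H0 c w x = (\<Sum>s\<in>Sc. c s * w (x - s))" for x
    unfolding H0_def Sc_def ..
  have finSc: "finite Sc" using fin_S Sc_def by simp
  have finW: "finite W" using fin_w W_def by simp
  have symS: "- s \<in> Sc" if "s \<in> Sc" for s
    using that real_E[of s] unfolding Sc_def coeff_support_def by simp
  have finL: "finite \<Lambda>" and hull: "\<Lambda> = lattice_hull \<Lambda>"
    using poly unfolding lattice_polytope_def lattice_convex_def by auto
  show ?thesis
    unfolding W_def[symmetric] Sc_def[symmetric]
  proof
    assume h: "\<forall>x. x \<notin> \<Lambda> \<longrightarrow> E * w x - H0 c w x = 0"
    show "W \<subseteq> S_interior Sc \<Lambda>"
    proof (rule ccontr)
      assume "\<not> W \<subseteq> S_interior Sc \<Lambda>"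
      then obtain x0 where x0: "x0 \<in> W" "x0 \<notin> S_interior Sc \<Lambda>" by auto
      then obtain y0 where y0: "y0 \<notin> \<Lambda>" "y0 = x0 \<or> (\<exists>s0\<in>Sc. y0 = x0 + s0)"
        unfolding S_interior_def by auto
      have "y0 \<notin> lattice_hull \<Lambda>" using y0 hull by simp
      then obtain a m where am: "contact_half_plane \<Lambda> a m" "y0 \<notin> half_plane a m"
        unfolding lattice_hull_def by auto
      have aL: "zdot a z \<ge> m" if "z \<in> \<Lambda>" for z
        using am(1) that unfolding contact_half_plane_def half_plane_def by auto
      have ay0: "zdot a y0 \<le> m - 1" using am(2) unfolding half_plane_def by auto
      define R :: "int ^ 'd \<Rightarrow> real ^ 'd" where "R z = (\<chi> i. real_of_int (z $ i))" for z
      have R_add: "R (x + y) = R x + R y" for x y by (simp add: R_def vec_eq_iff)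
      have R_diff: "R (x - y) = R x - R y" for x y by (simp add: R_def vec_eq_iff)
      have R_inj: "R x = R y \<Longrightarrow> x = y" for x y by (simp add: R_def vec_eq_iff)
      have R_zdot: "real_of_int (zdot a z) = R a \<bullet> R z" for z
        by (simp add: R_def zdot_def inner_vec_def)
      define Ms where "Ms = norm (R y0) + (\<Sum>z\<in>\<Lambda>. norm (R z))"
      have Ms0: "Ms \<ge> 0" unfolding Ms_def by (simp add: sum_nonneg)
      define \<delta> where "\<delta> = 1 / (Ms + 1)"
      have d0: "\<delta> > 0" unfolding \<delta>_def using Ms0 by simp
      have dMs: "\<delta> * Ms < 1" unfolding \<delta>_def using Ms0 by (simp add: divide_less_eq)
      have dbound: "\<delta> * (norm (R y0) + norm (R z)) < 1" if "z \<in> \<Lambda>" for z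
      proof -
        have "norm (R z) \<le> (\<Sum>z\<in>\<Lambda>. norm (R z))"
          using that finL by (intro member_le_sum) auto
        then have "norm (R y0) + norm (R z) \<le> Ms" unfolding Ms_def by simp
        then have "\<delta> * (norm (R y0) + norm (R z)) \<le> \<delta> * Ms" using d0 by simp
        then show ?thesis using dMs by linarith
      qed
      define P where "P = {p \<in> W \<times> W. fst p \<noteq> snd p} \<union> {p \<in> Sc \<times> Sc. fst p \<noteq> snd p}"
      define V where "V = (\<lambda>p. R (fst p - snd p)) ` P"
      have finV: "finite V" unfolding V_def P_def using finW finSc by auto
      have V0: "0 \<notin> V"
      proof
        assume "0 \<in> V"
        then obtain p where "p \<in> P" "R (fst p - snd p) = 0" unfolding V_def by auto
        then have "R (fst p - snd p) = R 0" by (simp add: R_def vec_eq_iff)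
        then have "fst p = snd p" using R_inj by fastforce
        then show False using \<open>p \<in> P\<close> unfolding P_def by auto
      qed
      obtain b where b: "norm (b - R a) < \<delta>" "\<forall>v\<in>V. b \<bullet> v \<noteq> 0"
        using generic[OF finV V0 d0, of "R a"] by blast
      define f where "f z = b \<bullet> R z" for z
      have f_add: "f (x + y) = f x + f y" for x y
        unfolding f_def by (simp add: R_add inner_add_right)
      have f_diff: "f (x - y) = f x - f y" for x y
        unfolding f_def by (simp add: R_diff inner_diff_right)
      have injW: "x = x'" if "x \<in> W" "x' \<in> W" "f x = f x'" for x x'
      proof (rule ccontr)
        assume "x \<noteq> x'"
        then have "R (x - x') \<in> V" unfolding V_def P_def using that
          by (intro image_eqI[of _ _ "(x, x')"]) auto
        then have "f (x - x') \<noteq> 0" using b unfolding f_def by auto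
        then show False using that f_diff by simp
      qed
      have injS: "x = x'" if "x \<in> Sc" "x' \<in> Sc" "f x = f x'" for x x'
      proof (rule ccontr)
        assume "x \<noteq> x'"
        then have "R (x - x') \<in> V" unfolding V_def P_def using that
          by (intro image_eqI[of _ _ "(x, x')"]) auto
        then have "f (x - x') \<noteq> 0" using b unfolding f_def by auto
        then show False using that f_diff by simp
      qed
      have approx: "\<bar>f z - real_of_int (zdot a z)\<bar> \<le> \<delta> * norm (R z)" for z
      proof -
        have "f z - real_of_int (zdot a z) = (b - R a) \<bullet> R z"
          unfolding f_def R_zdot by (simp add: inner_diff_left)
        also have "\<bar>\<dots>\<bar> \<le> norm (b - R a) * norm (R z)" by (rule Cauchy_Schwarz_ineq2)
        also have "\<dots> \<le> \<delta> * norm (R z)" using b(1) by (intro mult_right_mono) auto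
        finally show ?thesis .
      qed
      have "Min (f ` W) \<in> f ` W" using finW x0 by (intro Min_in) auto
      then obtain xs where xs: "xs \<in> W" "f xs = Min (f ` W)" by auto
      have xsmin: "f xs \<le> f x" if "x \<in> W" for x using xs finW that by simp
      obtain s1 where s1: "s1 \<in> Sc" "s1 \<noteq> 0" using nonconst Sc_def by auto
      have "Min (f ` Sc) \<in> f ` Sc" using finSc s1 by (intro Min_in) auto
      then obtain ss where ss: "ss \<in> Sc" "f ss = Min (f ` Sc)" by auto
      have ssmin: "f ss \<le> f x" if "x \<in> Sc" for x using ss finSc that by simp
      have "s1 \<noteq> - s1"
      proof
        assume "s1 = - s1"
        then have "s1 $ i = 0" for i by (metis neg_equal_zero vector_uminus_component)
        then show False using s1 by (simp add: vec_eq_iff)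
      qed
      then have "f s1 \<noteq> f (- s1)" using injS s1 symS by blast
      moreover have "f (- s1) = - f s1" using f_diff[of 0 s1] f_diff[of 0 0] by simp
      ultimately have fss: "f ss < 0" using ssmin[OF s1(1)] ssmin[OF symS[OF s1(1)]] by auto
      define y where "y = xs + ss"
      have fy: "f y = f xs + f ss" unfolding y_def f_add ..
      have fyy0: "f y \<le> f y0"
        using y0(2)
      proof
        assume "y0 = x0" then show ?thesis using fy fss xsmin[OF x0(1)] by simp
      next
        assume "\<exists>s0\<in>Sc. y0 = x0 + s0"
        then obtain s0 where "s0 \<in> Sc" "y0 = x0 + s0" by auto
        then show ?thesis using fy f_add xsmin[OF x0(1)] ssmin[of s0] by simp
      qed
      have ynL: "y \<notin> \<Lambda>"
      proof
        assume yL: "y \<in> \<Lambda>"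
        have "real_of_int (zdot a y) \<ge> real_of_int m" using aL[OF yL] by simp
        moreover have "real_of_int (zdot a y0) \<le> real_of_int m - 1" using ay0 by simp
        moreover note approx[of y] approx[of y0] dbound[OF yL] fyy0
        ultimately show False by (simp add: abs_le_iff algebra_simps)
      qed
      have wy: "w y = 0"
      proof (rule ccontr)
        assume "w y \<noteq> 0"
        then have "y \<in> W" unfolding W_def by simp
        then show False using xsmin fy fss by fastforce
      qed
      have "(\<Sum>s\<in>Sc. c s * w (y - s)) = (\<Sum>s\<in>Sc. if s = ss then c ss * w xs else 0)"
      proof (rule sum.cong)
        fix s assume sS: "s \<in> Sc"
        show "c s * w (y - s) = (if s = ss then c ss * w xs else 0)"
        proof (cases "s = ss")
          case True then show ?thesis by (simp add: y_def)
        next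
          case False
          have "w (y - s) = 0"
          proof (rule ccontr)
            assume "w (y - s) \<noteq> 0"
            then have "y - s \<in> W" unfolding W_def by simp
            then have "f (y - s) \<ge> f xs" using xsmin by simp
            moreover have "f s \<ge> f ss" using ssmin sS by simp
            moreover have "f (y - s) + f s = f xs + f ss" using f_diff fy by simp
            ultimately have "f s = f ss" by linarith
            then show False using injS sS ss(1) False by blast
          qed
          then show ?thesis using False by simp
        qed
      qed simp
      also have "\<dots> = c ss * w xs" using finSc ss(1) by simp
      finally have "H0 c w y = c ss * w xs" using H0e by simp
      moreover have "c ss \<noteq> 0" using ss(1) unfolding Sc_def coeff_support_def by simp
      moreover have "w xs \<noteq> 0" using xs(1) unfolding W_def by simp
      moreover have "E * w y - H0 c w y = 0" using h ynL by simp
      ultimately show False using wy by simp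
    qed
  next
    assume sub: "W \<subseteq> S_interior Sc \<Lambda>"
    show "\<forall>x. x \<notin> \<Lambda> \<longrightarrow> E * w x - H0 c w x = 0"
    proof (intro allI impI)
      fix x assume xL: "x \<notin> \<Lambda>"
      have wx: "w x = 0" using sub xL unfolding W_def S_interior_def by auto
      have "w (x - s) = 0" if "s \<in> Sc" for s
      proof (rule ccontr)
        assume "w (x - s) \<noteq> 0"
        then have "x - s \<in> S_interior Sc \<Lambda>" using sub unfolding W_def by auto
        then have "(x - s) + s \<in> \<Lambda>" using that unfolding S_interior_def by auto
        then show False using xL by simp
      qed
      then have "H0 c w x = 0" unfolding H0e by simp
      then show "E * w x - H0 c w x = 0" using wx by simp
    qed
  qed
qed

end
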